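(* Let $r$ be an $\mathfrak s$-matrix on a pre-Lie algebra $(\mathfrak g,\cdot_{\mathfrak g})$. Then $(\mathfrak g^*,\ast_r)$ is a pre-Lie algebra, where $\alpha\ast_r\beta=L^*_{r^\sharp(\alpha)}\beta$ for $\alpha,\beta\in\mathfrak g^*$.
   Context: A pre-Lie algebra is a finite-dimensional vector space $\mathfrak g$ over a field of characteristic $0$ with product $\cdot$ satisfying $(x\cdot y)\cdot z-x\cdot(y\cdot z)=(y\cdot x)\cdot z-y\cdot(x\cdot z)$; $[x,y]_{\mathfrak g}=x\cdot y-y\cdot x$. Define $\langle L^*_x\alpha,y\rangle=-\langle\alpha,x\cdot y\rangle$. For $r\in\mathrm{Sym}^2(\mathfrak g)$, $r^\sharp:\mathfrak g^*\to\mathfrak g$ is $\langle r^\sharp(\alpha),\beta\rangle=r(\alpha,\beta)$. For $r=\sum_ia_i\otimes b_i$, $[r,r]=-\sum_{i,j}a_i\cdot a_j\otimes b_i\otimes b_j+\sum_{i,j}a_i\otimes b_i\cdot a_j\otimes b_j+\sum_{i,j}a_i\otimes a_j\otimes[b_i,b_j]_{\mathfrak g}$; $r$ is an $\mathfrak s$-matrix if $r\in\mathrm{Sym}^2(\mathfrak g)$ and $[r,r]=0$. *)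

theory Defs
  imports Main
begin

text \<open>A finite-dimensional vector space over a field 'k of characteristic 0 is
  represented in coordinates w.r.t. a chosen basis indexed by the finite type 'n,
  i.e. as 'n \<Rightarrow> 'k. The dual space is represented likewise, with the
  pairing below (dual basis). Tensors in g\<otimes>g and g\<otimes>g\<otimes>g are
  coefficient arrays indexed by 'n \<times> 'n and 'n \<times> 'n \<times> 'n.\<close>

type_synonym ('k, 'n) vec = "'n \<Rightarrow> 'k"

definition basis_vec :: "'n \<Rightarrow> ('k::field, 'n) vec" where
  "basis_vec i = (\<lambda>k. if k = i then 1 else 0)"

definition pairing :: "('k::field, 'n::finite) vec \<Rightarrow> ('k, 'n) vec \<Rightarrow> 'k" where
  "pairing \<alpha> x = (\<Sum>i\<in>UNIV. \<alpha> i * x i)"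

definition bilinear_prod ::
  "(('k::field, 'n) vec \<Rightarrow> ('k, 'n) vec \<Rightarrow> ('k, 'n) vec) \<Rightarrow> bool" where
  "bilinear_prod m \<longleftrightarrow>
     (\<forall>x x' y a b. m (\<lambda>i. a * x i + b * x' i) y = (\<lambda>k. a * m x y k + b * m x' y k)) \<and>
     (\<forall>x y y' a b. m x (\<lambda>i. a * y i + b * y' i) = (\<lambda>k. a * m x y k + b * m x y' k))"

definition pre_Lie ::
  "(('k::field, 'n) vec \<Rightarrow> ('k, 'n) vec \<Rightarrow> ('k, 'n) vec) \<Rightarrow> bool" where
  "pre_Lie m \<longleftrightarrow> bilinear_prod m \<and>
     (\<forall>x y z. (\<lambda>k. m (m x y) z k - m x (m y z) k) = (\<lambda>k. m (m y x) z k - m y (m x z) k))"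

definition commutator ::
  "(('k::field, 'n) vec \<Rightarrow> ('k, 'n) vec \<Rightarrow> ('k, 'n) vec) \<Rightarrow> ('k, 'n) vec \<Rightarrow> ('k, 'n) vec \<Rightarrow> ('k, 'n) vec" where
  "commutator m x y = (\<lambda>k. m x y k - m y x k)"

definition tensor3 :: "('k::field, 'n) vec \<Rightarrow> ('k, 'n) vec \<Rightarrow> ('k, 'n) vec \<Rightarrow> ('n \<times> 'n \<times> 'n \<Rightarrow> 'k)" where
  "tensor3 x y z = (\<lambda>(p, q, s). x p * y q * z s)"

text \<open>[r,r] for r = \<Sum>_{i\<in>I} a_i \<otimes> b_i, computed by the paper's formula:
  [r,r] = -\<Sum> a_i\<cdot>a_j \<otimes> b_i \<otimes> b_j + \<Sum> a_i \<otimes> b_i\<cdot>a_j \<otimes> b_j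
          + \<Sum> a_i \<otimes> a_j \<otimes> [b_i,b_j].\<close>
definition rr_bracket_decomp ::
  "(('k::field, 'n::finite) vec \<Rightarrow> ('k, 'n) vec \<Rightarrow> ('k, 'n) vec) \<Rightarrow>
   'i set \<Rightarrow> ('i \<Rightarrow> ('k, 'n) vec) \<Rightarrow> ('i \<Rightarrow> ('k, 'n) vec) \<Rightarrow> ('n \<times> 'n \<times> 'n \<Rightarrow> 'k)" where
  "rr_bracket_decomp m I a b = (\<lambda>t. \<Sum>i\<in>I. \<Sum>j\<in>I.
      - tensor3 (m (a i) (a j)) (b i) (b j) t
      + tensor3 (a i) (m (b i) (a j)) (b j) t
      + tensor3 (a i) (a j) (commutator m (b i) (b j)) t)"

text \<open>A 2-tensor r \<in> g\<otimes>g given by coefficients r(i,j), i.e.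
  r = \<Sum>_{(i,j)} r(i,j) e_i \<otimes> e_j; [r,r] computed from this decomposition.\<close>
definition rr_bracket ::
  "(('k::field, 'n::finite) vec \<Rightarrow> ('k, 'n) vec \<Rightarrow> ('k, 'n) vec) \<Rightarrow> ('n \<times> 'n \<Rightarrow> 'k) \<Rightarrow> ('n \<times> 'n \<times> 'n \<Rightarrow> 'k)" where
  "rr_bracket m r = rr_bracket_decomp m UNIV
      (\<lambda>(i, j). (\<lambda>k. r (i, j) * basis_vec i k)) (\<lambda>(i, j). basis_vec j)"

definition symmetric_tensor :: "('n \<times> 'n \<Rightarrow> 'k) \<Rightarrow> bool" where
  "symmetric_tensor r \<longleftrightarrow> (\<forall>i j. r (i, j) = r (j, i))"

definition s_matrix ::
  "(('k::field, 'n::finite) vec \<Rightarrow> ('k, 'n) vec \<Rightarrow> ('k, 'n) vec) \<Rightarrow> ('n \<times> 'n \<Rightarrow> 'k) \<Rightarrow> bool" where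
  "s_matrix m r \<longleftrightarrow> symmetric_tensor r \<and> rr_bracket m r = (\<lambda>_. 0)"

text \<open>r^\<sharp> : g^* \<rightarrow> g, \<langle>r^\<sharp>(\<alpha>), \<beta>\<rangle> = r(\<alpha>,\<beta>) = \<Sum> r(i,j) \<alpha>_i \<beta>_j.\<close>
definition r_sharp :: "('n::finite \<times> 'n \<Rightarrow> 'k::field) \<Rightarrow> ('k, 'n) vec \<Rightarrow> ('k, 'n) vec" where
  "r_sharp r \<alpha> = (\<lambda>j. \<Sum>i\<in>UNIV. \<alpha> i * r (i, j))"

text \<open>L^*_x : g^* \<rightarrow> g^*, \<langle>L^*_x \<alpha>, y\<rangle> = -\<langle>\<alpha>, x\<cdot>y\<rangle>.\<close>
definition L_star ::
  "(('k::field, 'n::finite) vec \<Rightarrow> ('k, 'n) vec \<Rightarrow> ('k, 'n) vec) \<Rightarrow> ('k, 'n) vec \<Rightarrow> ('k, 'n) vec \<Rightarrow> ('k, 'n) vec" where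
  "L_star m x \<alpha> = (\<lambda>j. - pairing \<alpha> (m x (basis_vec j)))"

definition star_r ::
  "(('k::field, 'n::finite) vec \<Rightarrow> ('k, 'n) vec \<Rightarrow> ('k, 'n) vec) \<Rightarrow> ('n \<times> 'n \<Rightarrow> 'k) \<Rightarrow>
   ('k, 'n) vec \<Rightarrow> ('k, 'n) vec \<Rightarrow> ('k, 'n) vec" where
  "star_r m r \<alpha> \<beta> = L_star m (r_sharp r \<alpha>) \<beta>"

end

theory Submission
  imports Defs
begin


lemma pair_univ: "(\<Sum>x\<in>(UNIV::('a::finite \<times> 'a) set). f x) = (\<Sum>i\<in>UNIV. \<Sum>j\<in>UNIV. f (i,j))"
proof -
  have "(\<Sum>i\<in>(UNIV::'a set). \<Sum>j\<in>UNIV. f (i,j)) = (\<Sum>x\<in>UNIV \<times> UNIV. f x)"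
    by (simp add: sum.cartesian_product)
  then show ?thesis by simp
qed

lemma lin1: "bilinear_prod m \<Longrightarrow> m (\<lambda>i. a * x i + b * x' i) y = (\<lambda>k. a * m x y k + b * m x' y k)"
  unfolding bilinear_prod_def by (elim conjE) simp
lemma lin2: "bilinear_prod m \<Longrightarrow> m x (\<lambda>i. a * y i + b * y' i) = (\<lambda>k. a * m x y k + b * m x y' k)"
  unfolding bilinear_prod_def by (elim conjE) simp

lemma zero1: assumes "bilinear_prod m" shows "m (\<lambda>i. 0) y = (\<lambda>k. 0)"
  using lin1[OF assms, of 0 "\<lambda>i. 0" 0 "\<lambda>i. 0" y] by simp
lemma zero2: assumes "bilinear_prod m" shows "m x (\<lambda>i. 0) = (\<lambda>k. 0)"
  using lin2[OF assms, of x 0 "\<lambda>i. 0" 0 "\<lambda>i. 0"] by simp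
lemma scale1: assumes "bilinear_prod m" shows "m (\<lambda>i. c * x i) y = (\<lambda>k. c * m x y k)"
  using lin1[OF assms, of c x 0 x y] by simp
lemma scale2: assumes "bilinear_prod m" shows "m x (\<lambda>i. c * y i) = (\<lambda>k. c * m x y k)"
  using lin2[OF assms, of x c y 0 y] by simp
lemma diff1: assumes "bilinear_prod m" shows "m (\<lambda>i. x i - x' i) y = (\<lambda>k. m x y k - m x' y k)"
  using lin1[OF assms, of 1 x "-1" x' y] by simp
lemma add1: assumes "bilinear_prod m" shows "m (\<lambda>i. x i + x' i) y = (\<lambda>k. m x y k + m x' y k)"
  using lin1[OF assms, of 1 x "1" x' y] by simp
lemma add2: assumes "bilinear_prod m" shows "m x (\<lambda>i. y i + y' i) = (\<lambda>k. m x y k + m x y' k)"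
  using lin2[OF assms, of x 1 y 1 y'] by simp

lemma sum1: assumes "bilinear_prod m" "finite S"
  shows "m (\<lambda>i. \<Sum>s\<in>S. f s i) y = (\<lambda>k. \<Sum>s\<in>S. m (f s) y k)"
  using assms(2)
proof (induction S rule: finite_induct)
  case empty then show ?case using zero1[OF assms(1)] by simp
next
  case (insert x F)
  then show ?case using add1[OF assms(1), of "f x" "\<lambda>i. \<Sum>s\<in>F. f s i" y] by simp
qed

lemma sum2: assumes "bilinear_prod m" "finite S"
  shows "m y (\<lambda>i. \<Sum>s\<in>S. f s i) = (\<lambda>k. \<Sum>s\<in>S. m y (f s) k)"
  using assms(2)
proof (induction S rule: finite_induct)
  case empty then show ?case using zero2[OF assms(1)] by simp
next
  case (insert x F)
  then show ?case using add2[OF assms(1), of y "f x" "\<lambda>i. \<Sum>s\<in>F. f s i"] by simp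
qed

lemma pairing_sum: "pairing \<gamma> (\<lambda>k. \<Sum>s\<in>S. f s k) = (\<Sum>s\<in>S. pairing \<gamma> (f s))"
proof -
  have "pairing \<gamma> (\<lambda>k. \<Sum>s\<in>S. f s k) = (\<Sum>k\<in>UNIV. \<Sum>s\<in>S. \<gamma> k * f s k)"
    unfolding pairing_def by (simp add: sum_distrib_left)
  also have "\<dots> = (\<Sum>s\<in>S. \<Sum>k\<in>UNIV. \<gamma> k * f s k)" by (rule sum.swap)
  finally show ?thesis unfolding pairing_def .
qed

lemma pairing_scale: "pairing \<gamma> (\<lambda>k. c * f k) = c * pairing \<gamma> f"
  unfolding pairing_def by (simp add: sum_distrib_left algebra_simps)
lemma pairing_diff: "pairing \<gamma> (\<lambda>k. f k - g k) = pairing \<gamma> f - pairing \<gamma> g"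
  unfolding pairing_def by (simp add: sum_subtractf right_diff_distrib)
lemma pairing_add: "pairing \<gamma> (\<lambda>k. f k + g k) = pairing \<gamma> f + pairing \<gamma> g"
  unfolding pairing_def by (simp add: sum.distrib distrib_left)
lemma pairing_comm: "pairing a b = pairing b a"
  unfolding pairing_def by (simp add: mult.commute)
lemma pairing_basis: "pairing a (basis_vec j) = a j"
  unfolding pairing_def basis_vec_def by (simp add: if_distrib cong: if_cong)

lemma pairing_scale_l: "pairing (\<lambda>k. c * f k) g = c * pairing f g"
  unfolding pairing_def by (simp add: sum_distrib_left algebra_simps)
lemma pairing_basis_l: "pairing (basis_vec j) a = a j"
  using pairing_basis pairing_comm by metis

lemma GL: assumes "bilinear_prod m" "finite I"
  shows "(\<Sum>i\<in>I. \<Sum>j\<in>I. c i * d j * pairing \<gamma> (m (u i) (v j)))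
     = pairing \<gamma> (m (\<lambda>k. \<Sum>i\<in>I. c i * u i k) (\<lambda>k. \<Sum>j\<in>I. d j * v j k))"
  by (simp add: sum1[OF assms] sum2[OF assms] scale1[OF assms(1)] scale2[OF assms(1)]
        pairing_sum pairing_scale sum_distrib_left algebra_simps)


lemma vec_expand: "(y::('k::field,'n::finite) vec) = (\<lambda>i. \<Sum>j\<in>UNIV. y j * basis_vec j i)"
  by (rule ext) (simp add: basis_vec_def if_distrib eq_commute cong: if_cong)

lemma Lstar_pair: assumes "bilinear_prod m"
  shows "pairing (L_star m x \<beta>) (y::('k::field,'n::finite) vec) = - pairing \<beta> (m x y)"
proof -
  have "m x y = m x (\<lambda>i. \<Sum>j\<in>UNIV. y j * basis_vec j i)" using vec_expand[of y] by simp
  also have "\<dots> = (\<lambda>k. \<Sum>j\<in>UNIV. y j * m x (basis_vec j) k)"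
    by (simp add: sum2[OF assms] scale2[OF assms])
  finally have "pairing \<beta> (m x y) = (\<Sum>j\<in>UNIV. y j * pairing \<beta> (m x (basis_vec j)))"
    by (simp add: pairing_sum pairing_scale)
  then show ?thesis unfolding L_star_def
    by (simp add: pairing_def sum_negf algebra_simps)
qed

lemma V_eq: assumes "symmetric_tensor r"
  shows "(\<lambda>k. \<Sum>x\<in>UNIV. pairing \<alpha> ((\<lambda>(i,j). basis_vec j) x) *
            (\<lambda>(i,j). (\<lambda>k. r (i, j) * basis_vec i k)) x k)
       = r_sharp r (\<alpha>::('k::field,'n::finite) vec)"
proof (rule ext)
  fix k
  have "(\<Sum>x\<in>UNIV. pairing \<alpha> ((\<lambda>(i,j). basis_vec j) x) *
            (\<lambda>(i,j). (\<lambda>k. r (i, j) * basis_vec i k)) x k)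
     = (\<Sum>i\<in>UNIV. \<Sum>j\<in>UNIV. \<alpha> j * (r (i,j) * basis_vec i k))"
    by (simp add: pair_univ pairing_basis)
  also have "\<dots> = (\<Sum>j\<in>UNIV. \<Sum>i\<in>UNIV. \<alpha> j * (r (i,j) * basis_vec i k))"
    by (rule sum.swap)
  also have "\<dots> = (\<Sum>j\<in>UNIV. \<alpha> j * r (j,k))"
    using assms unfolding symmetric_tensor_def
    by (simp add: basis_vec_def if_distrib cong: if_cong)
  finally show "(\<Sum>x\<in>UNIV. pairing \<alpha> ((\<lambda>(i,j). basis_vec j) x) *
            (\<lambda>(i,j). (\<lambda>k. r (i, j) * basis_vec i k)) x k) = r_sharp r \<alpha> k"
    unfolding r_sharp_def .
qed

lemma W_eq:
  shows "(\<lambda>k. \<Sum>x\<in>UNIV. pairing \<beta> ((\<lambda>(i,j). (\<lambda>k. r (i, j) * basis_vec i k)) x) *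
            (\<lambda>(i,j). basis_vec j) x k)
       = r_sharp r (\<beta>::('k::field,'n::finite) vec)"
proof (rule ext)
  fix k
  have "(\<Sum>x\<in>UNIV. pairing \<beta> ((\<lambda>(i,j). (\<lambda>k. r (i, j) * basis_vec i k)) x) *
            (\<lambda>(i,j). basis_vec j) x k)
     = (\<Sum>i\<in>UNIV. \<Sum>j\<in>UNIV. (r (i,j) * \<beta> i) * basis_vec j k)"
    by (simp add: pair_univ pairing_scale pairing_basis)
  also have "\<dots> = (\<Sum>i\<in>UNIV. \<beta> i * r (i,k))"
    by (simp add: basis_vec_def if_distrib mult.commute cong: if_cong)
  finally show "(\<Sum>x\<in>UNIV. pairing \<beta> ((\<lambda>(i,j). (\<lambda>k. r (i, j) * basis_vec i k)) x) *
            (\<lambda>(i,j). basis_vec j) x k) = r_sharp r \<beta> k"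
    unfolding r_sharp_def .
qed



lemma rsharp_sym: assumes "symmetric_tensor r"
  shows "pairing \<delta> (r_sharp r \<alpha>) = pairing \<alpha> (r_sharp r \<delta>)"
proof -
  have "pairing \<delta> (r_sharp r \<alpha>) = (\<Sum>j\<in>UNIV. \<Sum>i\<in>UNIV. \<delta> j * (\<alpha> i * r (i,j)))"
    unfolding pairing_def r_sharp_def by (simp add: sum_distrib_left)
  also have "\<dots> = (\<Sum>i\<in>UNIV. \<Sum>j\<in>UNIV. \<delta> j * (\<alpha> i * r (i,j)))" by (rule sum.swap)
  also have "\<dots> = (\<Sum>i\<in>UNIV. \<Sum>j\<in>UNIV. \<alpha> i * (\<delta> j * r (j,i)))"
    using assms unfolding symmetric_tensor_def by (simp add: mult_ac)
  also have "\<dots> = pairing \<alpha> (r_sharp r \<delta>)"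
    unfolding pairing_def r_sharp_def by (simp add: sum_distrib_left)
  finally show ?thesis .
qed

lemma tri: "(\<Sum>p\<in>UNIV. \<Sum>q\<in>UNIV. \<Sum>s\<in>UNIV. \<beta> p * \<alpha> q * \<delta> s * (X p * Y q * Z s))
   = pairing \<beta> X * pairing \<alpha> Y * pairing (\<delta>::('k::field,'n::finite) vec) Z"
proof -
  have "(\<Sum>p\<in>UNIV. \<Sum>q\<in>UNIV. \<Sum>s\<in>UNIV. \<beta> p * \<alpha> q * \<delta> s * (X p * Y q * Z s))
     = (\<Sum>p\<in>UNIV. \<beta> p * X p * (\<Sum>q\<in>UNIV. \<alpha> q * Y q * (\<Sum>s\<in>UNIV. \<delta> s * Z s)))"
    by (simp add: sum_distrib_left mult_ac)
  also have "\<dots> = (\<Sum>p\<in>UNIV. \<beta> p * X p) * ((\<Sum>q\<in>UNIV. \<alpha> q * Y q) * (\<Sum>s\<in>UNIV. \<delta> s * Z s))"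
    by (simp only: sum_distrib_right)
  finally show ?thesis unfolding pairing_def by (simp only: mult.assoc)
qed

lemma pairing_neg: "pairing \<gamma> (\<lambda>k. - f k) = - pairing \<gamma> f"
  unfolding pairing_def by (simp add: sum_negf)

lemma contract: assumes "finite I"
  shows "(\<Sum>p\<in>UNIV. \<Sum>q\<in>UNIV. \<Sum>s\<in>UNIV. \<beta> p * \<alpha> q * \<delta> s * rr_bracket_decomp m I a b (p,q,s))
   = (\<Sum>i\<in>I. \<Sum>j\<in>I. - (pairing \<alpha> (b i) * pairing \<delta> (b j) * pairing \<beta> (m (a i) (a j)))
       + pairing \<beta> (a i) * pairing \<delta> (b j) * pairing \<alpha> (m (b i) (a j))
       + pairing \<beta> (a i) * pairing \<alpha> (a j) * pairing (\<delta>::('k::field,'n::finite) vec) (commutator m (b i) (b j)))"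
proof -
  have "(\<Sum>p\<in>UNIV. \<Sum>q\<in>UNIV. \<Sum>s\<in>UNIV. \<beta> p * \<alpha> q * \<delta> s * rr_bracket_decomp m I a b (p,q,s))
     = (\<Sum>p\<in>UNIV. \<Sum>q\<in>UNIV. \<Sum>s\<in>UNIV. \<Sum>i\<in>I. \<Sum>j\<in>I. \<beta> p * \<alpha> q * \<delta> s *
          ((\<lambda>p. - m (a i) (a j) p) p * b i q * b j s
         + a i p * m (b i) (a j) q * b j s
         + a i p * a j q * commutator m (b i) (b j) s))"
    unfolding rr_bracket_decomp_def tensor3_def by (simp add: sum_distrib_left)
  also have "\<dots> = (\<Sum>i\<in>I. \<Sum>j\<in>I. \<Sum>p\<in>UNIV. \<Sum>q\<in>UNIV. \<Sum>s\<in>UNIV. \<beta> p * \<alpha> q * \<delta> s *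
          ((\<lambda>p. - m (a i) (a j) p) p * b i q * b j s
         + a i p * m (b i) (a j) q * b j s
         + a i p * a j q * commutator m (b i) (b j) s))"
    by (simp only: sum.swap[of _ UNIV I])
  also have "\<dots> = (\<Sum>i\<in>I. \<Sum>j\<in>I. pairing \<beta> (\<lambda>p. - m (a i) (a j) p) * pairing \<alpha> (b i) * pairing \<delta> (b j)
       + pairing \<beta> (a i) * pairing \<alpha> (m (b i) (a j)) * pairing \<delta> (b j)
       + pairing \<beta> (a i) * pairing \<alpha> (a j) * pairing \<delta> (commutator m (b i) (b j)))"
    by (simp only: distrib_left sum.distrib tri)
  finally show ?thesis by (simp add: pairing_neg mult_ac)
qed

lemma TL: fixes m :: "('k::field, 'n::finite) vec \<Rightarrow> ('k, 'n) vec \<Rightarrow> ('k, 'n) vec"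
  assumes bil: "bilinear_prod m" and sym: "symmetric_tensor r" and rr: "rr_bracket m r = (\<lambda>_. 0)"
  shows "pairing \<beta> (m (r_sharp r \<alpha>) (r_sharp r \<delta>)) - pairing \<alpha> (m (r_sharp r \<beta>) (r_sharp r \<delta>))
     + pairing \<delta> (m (r_sharp r \<alpha>) (r_sharp r \<beta>)) - pairing \<delta> (m (r_sharp r \<beta>) (r_sharp r \<alpha>)) = 0"
proof -
  define a :: "'n \<times> 'n \<Rightarrow> ('k,'n) vec" where "a = (\<lambda>(i,j). (\<lambda>k. r (i, j) * basis_vec i k))"
  define b :: "'n \<times> 'n \<Rightarrow> ('k,'n) vec" where "b = (\<lambda>(i,j). basis_vec j)"
  define R where "R = r_sharp r"
  have V: "\<And>\<alpha>. (\<lambda>k. \<Sum>x\<in>UNIV. pairing \<alpha> (b x) * a x k) = R \<alpha>"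
    unfolding a_def b_def R_def by (rule V_eq[OF sym])
  have W: "\<And>\<beta>. (\<lambda>k. \<Sum>x\<in>UNIV. pairing \<beta> (a x) * b x k) = R \<beta>"
    unfolding a_def b_def R_def by (rule W_eq)
  have fin: "finite (UNIV :: ('n \<times> 'n) set)" by simp
  have Z2: "(\<Sum>i\<in>UNIV. \<Sum>j\<in>UNIV. pairing \<beta> (a i) * pairing \<alpha> (a j) * pairing \<delta> (m (b j) (b i)))
      = (\<Sum>j\<in>UNIV. \<Sum>i\<in>UNIV. pairing \<alpha> (a j) * pairing \<beta> (a i) * pairing \<delta> (m (b j) (b i)))"
  proof -
    have "(\<Sum>i\<in>UNIV. \<Sum>j\<in>UNIV. pairing \<beta> (a i) * pairing \<alpha> (a j) * pairing \<delta> (m (b j) (b i)))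
      = (\<Sum>j\<in>UNIV. \<Sum>i\<in>UNIV. pairing \<beta> (a i) * pairing \<alpha> (a j) * pairing \<delta> (m (b j) (b i)))"
      by (rule sum.swap)
    then show ?thesis by (simp add: mult.commute mult.left_commute)
  qed
  have "0 = (\<Sum>p\<in>UNIV. \<Sum>q\<in>UNIV. \<Sum>s\<in>UNIV. \<beta> p * \<alpha> q * \<delta> s * rr_bracket_decomp m UNIV a b (p,q,s))"
    using rr unfolding rr_bracket_def a_def b_def by (simp add: fun_eq_iff)
  also have "\<dots> = (\<Sum>i\<in>UNIV. \<Sum>j\<in>UNIV. - (pairing \<alpha> (b i) * pairing \<delta> (b j) * pairing \<beta> (m (a i) (a j)))
       + pairing \<beta> (a i) * pairing \<delta> (b j) * pairing \<alpha> (m (b i) (a j))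
       + pairing \<beta> (a i) * pairing \<alpha> (a j) * pairing \<delta> (commutator m (b i) (b j)))"
    by (rule contract[OF fin])
  also have "\<dots> = (\<Sum>i\<in>UNIV. \<Sum>j\<in>UNIV. - (pairing \<alpha> (b i) * pairing \<delta> (b j) * pairing \<beta> (m (a i) (a j)))
       + pairing \<beta> (a i) * pairing \<delta> (b j) * pairing \<alpha> (m (b i) (a j))
       + (pairing \<beta> (a i) * pairing \<alpha> (a j) * pairing \<delta> (m (b i) (b j))
          - pairing \<beta> (a i) * pairing \<alpha> (a j) * pairing \<delta> (m (b j) (b i))))"
    by (simp add: commutator_def pairing_diff algebra_simps)
  also have "\<dots> = - (\<Sum>i\<in>UNIV. \<Sum>j\<in>UNIV. pairing \<alpha> (b i) * pairing \<delta> (b j) * pairing \<beta> (m (a i) (a j)))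
       + (\<Sum>i\<in>UNIV. \<Sum>j\<in>UNIV. pairing \<beta> (a i) * pairing \<delta> (b j) * pairing \<alpha> (m (b i) (a j)))
       + (\<Sum>i\<in>UNIV. \<Sum>j\<in>UNIV. pairing \<beta> (a i) * pairing \<alpha> (a j) * pairing \<delta> (m (b i) (b j)))
       - (\<Sum>i\<in>UNIV. \<Sum>j\<in>UNIV. pairing \<beta> (a i) * pairing \<alpha> (a j) * pairing \<delta> (m (b j) (b i)))"
    by (simp only: sum.distrib sum_subtractf sum_negf add.assoc diff_conv_add_uminus)
  also have "\<dots> = - pairing \<beta> (m (R \<alpha>) (R \<delta>)) + pairing \<alpha> (m (R \<beta>) (R \<delta>))
       + pairing \<delta> (m (R \<beta>) (R \<alpha>)) - pairing \<delta> (m (R \<alpha>) (R \<beta>))"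
    by (simp only: Z2 GL[OF bil fin] V W)
  finally show ?thesis unfolding R_def by (simp add: algebra_simps)
qed


lemma pairing_lin_l: "pairing (\<lambda>i. a * x i + b * x' i) y = a * pairing x y + b * pairing x' y"
  unfolding pairing_def by (simp add: sum.distrib sum_distrib_left algebra_simps)

lemma rsharp_lin: "r_sharp r (\<lambda>i. a * x i + b * x' i) = (\<lambda>j. a * r_sharp r x j + b * r_sharp r x' j)"
  unfolding r_sharp_def by (simp add: sum.distrib sum_distrib_left algebra_simps)

theorem proposition4p2:
  fixes m :: "('k::field_char_0, 'n::finite) vec \<Rightarrow> ('k, 'n) vec \<Rightarrow> ('k, 'n) vec"
    and r :: "'n \<times> 'n \<Rightarrow> 'k"
  assumes "pre_Lie m"
    and "s_matrix m r"
  shows "pre_Lie (star_r m r)"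
proof -
  have bil: "bilinear_prod m" using assms(1) unfolding pre_Lie_def by blast
  have pl: "\<And>x y z. (\<lambda>k. m (m x y) z k - m x (m y z) k) = (\<lambda>k. m (m y x) z k - m y (m x z) k)"
    using assms(1) unfolding pre_Lie_def by blast
  have sym: "symmetric_tensor r" and rr: "rr_bracket m r = (\<lambda>_. 0)"
    using assms(2) unfolding s_matrix_def by blast+
  define S where "S = star_r m r"
  define R where "R = r_sharp r"
  have comp: "\<And>u k. u k = pairing u (basis_vec k)" by (simp add: pairing_basis)
  have Spair: "\<And>\<alpha> \<beta> y. pairing (S \<alpha> \<beta>) y = - pairing \<beta> (m (R \<alpha>) y)"
    unfolding S_def R_def star_r_def by (rule Lstar_pair[OF bil])
  have K: "\<And>\<alpha> \<beta>. R (S \<alpha> \<beta>) = (\<lambda>k. R (S \<beta> \<alpha>) k + (m (R \<alpha>) (R \<beta>) k - m (R \<beta>) (R \<alpha>) k))"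
  proof (rule ext)
    fix \<alpha> \<beta> k
    have e1: "R (S \<alpha> \<beta>) k = - pairing \<beta> (m (R \<alpha>) (R (basis_vec k)))"
      using comp[of "R (S \<alpha> \<beta>)" k] pairing_comm[of "R (S \<alpha> \<beta>)" "basis_vec k"]
        rsharp_sym[OF sym, of "basis_vec k" "S \<alpha> \<beta>"] Spair unfolding R_def by simp
    have e2: "R (S \<beta> \<alpha>) k = - pairing \<alpha> (m (R \<beta>) (R (basis_vec k)))"
      using comp[of "R (S \<beta> \<alpha>)" k] pairing_comm[of "R (S \<beta> \<alpha>)" "basis_vec k"]
        rsharp_sym[OF sym, of "basis_vec k" "S \<beta> \<alpha>"] Spair unfolding R_def by simp
    have e3: "\<And>u. u k = pairing (basis_vec k) u" using comp pairing_comm by metis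
    have t: "pairing \<beta> (m (R \<alpha>) (R (basis_vec k))) - pairing \<alpha> (m (R \<beta>) (R (basis_vec k)))
     + pairing (basis_vec k) (m (R \<alpha>) (R \<beta>)) - pairing (basis_vec k) (m (R \<beta>) (R \<alpha>)) = 0"
      unfolding R_def by (rule TL[OF bil sym rr])
    show "R (S \<alpha> \<beta>) k = R (S \<beta> \<alpha>) k + (m (R \<alpha>) (R \<beta>) k - m (R \<beta>) (R \<alpha>) k)"
      using e1 e2 t e3[of "m (R \<alpha>) (R \<beta>)"] e3[of "m (R \<beta>) (R \<alpha>)"] by (simp add: algebra_simps)
  qed
  have PL2: "\<And>u v y. m (\<lambda>k. m u v k - m v u k) y = (\<lambda>k. m u (m v y) k - m v (m u y) k)"
  proof -
    fix u v y
    have "\<And>k. m (m u v) y k - m u (m v y) k = m (m v u) y k - m v (m u y) k"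
      using pl[of u v y] by (simp add: fun_eq_iff)
    then show "m (\<lambda>k. m u v k - m v u k) y = (\<lambda>k. m u (m v y) k - m v (m u y) k)"
      by (simp add: diff1[OF bil] fun_eq_iff algebra_simps)
  qed
  have bilS: "bilinear_prod S"
    unfolding bilinear_prod_def
  proof (intro conjI allI)
    fix x x' y a b
    show "S (\<lambda>i. a * x i + b * x' i) y = (\<lambda>k. a * S x y k + b * S x' y k)"
      unfolding S_def star_r_def L_star_def rsharp_lin
      by (simp add: lin1[OF bil] fun_eq_iff pairing_add pairing_scale algebra_simps)
  next
    fix x y y' a b
    show "S x (\<lambda>i. a * y i + b * y' i) = (\<lambda>k. a * S x y k + b * S x y' k)"
      unfolding S_def star_r_def L_star_def
      by (simp add: fun_eq_iff pairing_lin_l algebra_simps)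
  qed
  have ident: "\<And>x y z. (\<lambda>k. S (S x y) z k - S x (S y z) k) = (\<lambda>k. S (S y x) z k - S y (S x z) k)"
  proof (rule ext)
    fix x y z k
    define w :: "('k,'n) vec" where "w = basis_vec k"
    have A: "\<And>x y. S (S x y) z k - S x (S y z) k
         = - pairing z (m (R (S x y)) w) - pairing z (m (R y) (m (R x) w))"
      using comp Spair unfolding w_def by (metis diff_minus_eq_add minus_minus)
    have B: "m (R (S x y)) w = (\<lambda>j. m (R (S y x)) w j + (m (R x) (m (R y) w) j - m (R y) (m (R x) w) j))"
      unfolding K[of x y] by (simp add: add1[OF bil] PL2)
    show "S (S x y) z k - S x (S y z) k = S (S y x) z k - S y (S x z) k"
      unfolding A B by (simp add: pairing_add pairing_diff algebra_simps)
  qed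
  show ?thesis unfolding pre_Lie_def S_def[symmetric] using bilS ident by blast
qed

end
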